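(* Let $a\in C^1([0,T]\times[-\pi,\pi])$ solve $$\partial_t a+\Big(\int_{-\pi}^x a(t,\bar x)\,d\bar x\Big)\partial_x a-a^2+\frac1\pi\int_{-\pi}^{\pi}a^2\,dx=0,\qquad \int_{-\pi}^\pi a(t,x)dx=0,$$ and set $a_0=a(0,\cdot)$. Assume $\partial_x a_0(x_0^* )=0$ at some point $x_0^*$. Then for all $t\in[0,T]$, $\partial_x a(t,x^*(t))=0$, where $x^*$ is the characteristic starting from $x_0^*$.
   Context: The characteristic starting from $x_0^*$ is the solution of $\frac{d}{dt}x^*(t)=\int_{-\pi}^{x^*(t)}a(t,x)\,dx$, $x^*(0)=x_0^*$. *)

theory Defs
  imports "HOL-Analysis.Analysis"
begin

end

theory Submission
  imports Defs
begin


lemma mvt_bound_real: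
  fixes f f' :: "real \<Rightarrow> real"
  assumes "a \<le> b"
    and d: "\<And>x. x \<in> {a..b} \<Longrightarrow> (f has_real_derivative f' x) (at x within {a..b})"
    and B: "\<And>x. x \<in> {a..b} \<Longrightarrow> \<bar>f' x\<bar> \<le> B"
  shows "\<bar>f b - f a\<bar> \<le> B * (b - a)"
proof -
  have "\<exists>x\<in>{a..b}. f b - f a = (\<lambda>h. f' x * h) (b - a)"
    using assms(1) d by (intro mvt_very_simple) (auto simp: has_field_derivative_def)
  then obtain x where x: "x \<in> {a..b}" "f b - f a = f' x * (b - a)" by auto
  have "\<bar>f' x * (b - a)\<bar> = \<bar>f' x\<bar> * (b - a)" using assms(1) by (simp add: abs_mult)
  also have "\<dots> \<le> B * (b - a)" using B[OF x(1)] assms(1) by (simp add: mult_right_mono)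
  finally show ?thesis using x by simp
qed

lemma mvt_mono_real:
  fixes f f' :: "real \<Rightarrow> real"
  assumes "a \<le> b"
    and d: "\<And>x. x \<in> {a..b} \<Longrightarrow> (f has_real_derivative f' x) (at x within {a..b})"
    and B: "\<And>x. x \<in> {a..b} \<Longrightarrow> f' x \<ge> 0"
  shows "f a \<le> f b"
proof -
  have "\<exists>x\<in>{a..b}. f b - f a = (\<lambda>h. f' x * h) (b - a)"
    using assms(1) d by (intro mvt_very_simple) (auto simp: has_field_derivative_def)
  then obtain x where x: "x \<in> {a..b}" "f b - f a = f' x * (b - a)" by auto
  have "f' x * (b - a) \<ge> 0" using B[OF x(1)] assms(1) by simp
  then show ?thesis using x by simp
qed

lemma gronwall_sq:
  fixes D D' :: "real \<Rightarrow> real"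
  assumes d: "\<And>t. t \<in> {0..T} \<Longrightarrow> (D has_real_derivative D' t) (at t within {0..T})"
    and b: "\<And>t. t \<in> {0..T} \<Longrightarrow> \<bar>D' t\<bar> \<le> L * \<bar>D t\<bar> + c"
    and L: "L \<ge> 0" and c: "c \<ge> 0"
    and t: "t \<in> {0..T}"
  shows "(D t)^2 \<le> exp ((2*L+1)*T) * ((D 0)^2 + c^2)"
proof -
  define K where "K = 2*L+1"
  have K: "K \<ge> 1" using L by (simp add: K_def)
  define g where "g s = exp (- K * s) * ((D s)^2 + c^2/K)" for s
  define g' where "g' s = exp (- K * s) * (2 * D s * D' s - K * (D s)^2 - c^2)" for s
  have sub: "{0..t} \<subseteq> {0..T}" using t by auto
  have gd: "(g has_real_derivative g' s) (at s within {0..t})" if s: "s \<in> {0..t}" for s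
  proof -
    have "(D has_real_derivative D' s) (at s within {0..t})"
      using d[of s] s sub by (auto intro: DERIV_subset)
    then have "(g has_real_derivative
        (exp (- K * s) * (-K) * ((D s)^2 + c^2/K) + exp (- K * s) * (2 * D s * D' s))) (at s within {0..t})"
      unfolding g_def
      by (auto intro!: derivative_eq_intros simp: power2_eq_square)
    moreover have "exp (- K * s) * (-K) * ((D s)^2 + c^2/K) + exp (- K * s) * (2 * D s * D' s) = g' s"
      using K by (simp add: g'_def field_simps)
    ultimately show ?thesis by simp
  qed
  have gn: "- g' s \<ge> 0" if s: "s \<in> {0..t}" for s
  proof -
    have bs: "\<bar>D' s\<bar> \<le> L * \<bar>D s\<bar> + c" using b[of s] s sub by auto
    have "2 * D s * D' s \<le> 2 * \<bar>D s\<bar> * \<bar>D' s\<bar>"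
    proof -
      have "D s * D' s \<le> \<bar>D s * D' s\<bar>" by (rule abs_ge_self)
      then show ?thesis by (simp add: abs_mult)
    qed
    also have "\<dots> \<le> 2 * \<bar>D s\<bar> * (L * \<bar>D s\<bar> + c)"
      using bs by (simp add: mult_left_mono)
    also have "\<dots> \<le> K * (D s)^2 + c^2"
    proof -
      have "0 \<le> (\<bar>D s\<bar> - c)^2" by simp
      then show ?thesis unfolding K_def by (simp add: power2_eq_square algebra_simps)
    qed
    finally have "2 * D s * D' s - K * (D s)^2 - c^2 \<le> 0" by simp
    then show ?thesis unfolding g'_def by (simp add: mult_nonneg_nonpos)
  qed
  have "(\<lambda>s. - g s) 0 \<le> (\<lambda>s. - g s) t"
  proof (rule mvt_mono_real[where f = "\<lambda>s. - g s" and f' = "\<lambda>s. - g' s"])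
    show "0 \<le> t" using t by simp
    show "((\<lambda>s. - g s) has_real_derivative - g' s) (at s within {0..t})" if "s \<in> {0..t}" for s
      using gd[OF that] by (rule DERIV_minus)
    show "0 \<le> - g' s" if "s \<in> {0..t}" for s using gn[OF that] .
  qed
  then have gt: "g t \<le> g 0" by simp
  have "(D t)^2 + c^2/K \<le> exp (K*t) * ((D 0)^2 + c^2/K)"
    using gt unfolding g_def by (simp add: exp_minus field_simps)
  also have "\<dots> \<le> exp (K*T) * ((D 0)^2 + c^2)"
  proof (rule mult_mono)
    show "exp (K*t) \<le> exp (K*T)" using t K by auto
    show "(D 0)^2 + c^2/K \<le> (D 0)^2 + c^2" using K by (simp add: divide_le_eq mult_le_cancel_left1)
    show "0 \<le> (D 0)^2 + c^2/K" using K by simp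
  qed auto
  finally have "(D t)^2 \<le> exp (K*T) * ((D 0)^2 + c^2) - c^2/K" by simp
  also have "\<dots> \<le> exp (K*T) * ((D 0)^2 + c^2)" using K by simp
  finally show ?thesis by (simp add: K_def)
qed




locale char_ctx =
  fixes a a_t a_x :: "real \<Rightarrow> real \<Rightarrow> real"
    and xs :: "real \<Rightarrow> real"
    and T x0 :: real
  assumes C1_deriv: "\<And>t x. t \<in> {0..T} \<Longrightarrow> x \<in> {-pi..pi} \<Longrightarrow>
      ((\<lambda>p. a (fst p) (snd p)) has_derivative (\<lambda>(h, k). a_t t x * h + a_x t x * k))
        (at (t, x) within {0..T} \<times> {-pi..pi})"
    and C1_cont_x: "continuous_on ({0..T} \<times> {-pi..pi}) (\<lambda>p. a_x (fst p) (snd p))"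
    and pde: "\<And>t x. t \<in> {0..T} \<Longrightarrow> x \<in> {-pi..pi} \<Longrightarrow>
      a_t t x + integral {-pi..x} (a t) * a_x t x - (a t x)\<^sup>2
        + (1 / pi) * integral {-pi..pi} (\<lambda>y. (a t y)\<^sup>2) = 0"
    and mean_zero: "\<And>t. t \<in> {0..T} \<Longrightarrow> integral {-pi..pi} (a t) = 0"
    and x0_in: "x0 \<in> {-pi..pi}"
    and crit: "a_x 0 x0 = 0"
    and char_init: "xs 0 = x0"
    and char_range: "\<And>t. t \<in> {0..T} \<Longrightarrow> xs t \<in> {-pi..pi}"
    and char_ode: "\<And>t. t \<in> {0..T} \<Longrightarrow>
      (xs has_real_derivative integral {-pi..xs t} (a t)) (at t within {0..T})"
begin

definition "R = {0..T} \<times> {-pi..pi}"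
definition "u t x = integral {-pi..x} (a t)"

lemma a_cont: "continuous_on R (\<lambda>p. a (fst p) (snd p))"
  unfolding R_def
  apply (rule has_derivative_continuous_on[where f' = "\<lambda>p. (\<lambda>(h, k). a_t (fst p) (snd p) * h + a_x (fst p) (snd p) * k)"])
  subgoal for p using C1_deriv[of "fst p" "snd p"] by (auto simp: mem_Times_iff)
  done

lemma a_cont_x: assumes t: "t \<in> {0..T}" shows "continuous_on {-pi..pi} (a t)"
proof -
  have c: "continuous_on {-pi..pi} (\<lambda>x. (t, x))" by (intro continuous_intros)
  have s: "(\<lambda>x. (t, x)) ` {-pi..pi} \<subseteq> R" using t by (auto simp: R_def)
  show ?thesis using continuous_on_compose2[OF a_cont c s] by simp
qed

lemma a_xderiv:
  assumes t: "t \<in> {0..T}" and x: "x \<in> {-pi..pi}"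
  shows "((a t) has_real_derivative a_x t x) (at x within {-pi..pi})"
proof -
  have f: "((\<lambda>y. (t, y)) has_derivative (\<lambda>k. (0, k))) (at x within {-pi..pi})"
    by (auto intro!: derivative_eq_intros)
  have "((\<lambda>p. a (fst p) (snd p)) \<circ> (\<lambda>y. (t, y)) has_derivative
        (\<lambda>(h, k). a_t t x * h + a_x t x * k) \<circ> (\<lambda>k. (0, k))) (at x within {-pi..pi})"
    by (rule diff_chain_within[OF f has_derivative_subset[OF C1_deriv[OF t x]]]) (use t in auto)
  then have "((a t) has_derivative (\<lambda>k. a_x t x * k)) (at x within {-pi..pi})"
    by (simp add: o_def)
  then show ?thesis unfolding has_field_derivative_def
    by (rule has_derivative_eq_rhs) (auto simp: fun_eq_iff)
qed

lemma bounds: "\<exists>M>0. \<forall>t\<in>{0..T}. \<forall>x\<in>{-pi..pi}. \<bar>a t x\<bar> \<le> M \<and> \<bar>a_x t x\<bar> \<le> M"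
proof -
  have cR: "compact R" unfolding R_def by (intro compact_Times compact_Icc)
  obtain M1 where M1: "\<forall>p\<in>R. \<bar>a (fst p) (snd p)\<bar> \<le> M1"
    using compact_imp_bounded[OF compact_continuous_image[OF a_cont cR]]
    unfolding bounded_iff by auto
  obtain M2 where M2: "\<forall>p\<in>R. \<bar>a_x (fst p) (snd p)\<bar> \<le> M2"
    using compact_imp_bounded[OF compact_continuous_image[OF C1_cont_x cR[unfolded R_def]]]
    unfolding bounded_iff R_def by auto
  show ?thesis
    apply (rule exI[of _ "max 1 (max M1 M2)"])
    using M1 M2 unfolding R_def by force
qed

lemma u_deriv: "t \<in> {0..T} \<Longrightarrow> x \<in> {-pi..pi} \<Longrightarrow>
   ((u t) has_real_derivative a t x) (at x within {-pi..pi})"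
  unfolding u_def[abs_def] by (rule integral_has_real_derivative[OF a_cont_x])

lemma u_bound:
  assumes t: "t \<in> {0..T}" and x: "x \<in> {-pi..pi}" and y: "y \<in> {-pi..pi}"
    and B: "\<And>z. z \<in> {min x y..max x y} \<Longrightarrow> \<bar>a t z - c\<bar> \<le> B"
  shows "\<bar>u t y - u t x - c * (y - x)\<bar> \<le> B * \<bar>y - x\<bar>"
proof -
  define g where "g z = u t z - c * z" for z
  have sub: "{min x y..max x y} \<subseteq> {-pi..pi}" using x y by auto
  have "\<bar>g (max x y) - g (min x y)\<bar> \<le> B * (max x y - min x y)"
  proof (rule mvt_bound_real[where f' = "\<lambda>z. a t z - c"])
    fix z assume z: "z \<in> {min x y..max x y}"
    have "((u t) has_real_derivative a t z) (at z within {min x y..max x y})"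
      by (rule DERIV_subset[OF u_deriv[OF t]]) (use z sub in auto)
    then show "(g has_real_derivative a t z - c) (at z within {min x y..max x y})"
      unfolding g_def[abs_def] by (auto intro!: derivative_eq_intros)
  qed (use B in auto)
  moreover have "\<bar>g (max x y) - g (min x y)\<bar> = \<bar>u t y - u t x - c * (y - x)\<bar>"
    by (cases "x \<le> y") (auto simp: g_def max_def min_def algebra_simps abs_minus_commute)
  moreover have "max x y - min x y = \<bar>y - x\<bar>" by auto
  ultimately show ?thesis by simp
qed

lemma u_unif:
  assumes e: "e > 0"
  shows "\<exists>d>0. \<forall>t\<in>{0..T}. \<forall>x\<in>{-pi..pi}. \<forall>y\<in>{-pi..pi}. \<bar>y - x\<bar> < d \<longrightarrow>
     \<bar>u t y - u t x - a t x * (y - x)\<bar> \<le> e * \<bar>y - x\<bar>"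
proof -
  have "uniformly_continuous_on R (\<lambda>p. a (fst p) (snd p))"
    by (rule compact_uniformly_continuous[OF a_cont]) (auto simp: R_def intro: compact_Times)
  then obtain d where d: "d > 0" and
    dd: "\<forall>p\<in>R. \<forall>p'\<in>R. dist p' p < d \<longrightarrow> dist (a (fst p') (snd p')) (a (fst p) (snd p)) < e"
    unfolding uniformly_continuous_on_def using e by metis
  show ?thesis
  proof (intro exI[of _ d] conjI ballI impI d)
    fix t x y assume t: "t \<in> {0..T}" and x: "x \<in> {-pi..pi}" and y: "y \<in> {-pi..pi}"
      and xy: "\<bar>y - x\<bar> < d"
    show "\<bar>u t y - u t x - a t x * (y - x)\<bar> \<le> e * \<bar>y - x\<bar>"
    proof (rule u_bound[OF t x y])
      fix z assume z: "z \<in> {min x y..max x y}"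
      have zR: "(t, z) \<in> R" and xR: "(t, x) \<in> R" using z x y t by (auto simp: R_def)
      have "dist (t, z) (t, x) = \<bar>z - x\<bar>" by (simp add: dist_Pair_Pair dist_real_def)
      also have "\<dots> < d" using z xy by auto
      finally have "dist (a t z) (a t x) < e" using dd zR xR by fastforce
      then show "\<bar>a t z - a t x\<bar> \<le> e" by (simp add: dist_real_def)
    qed
  qed
qed

lemma xs_cont: "continuous_on {0..T} xs"
  using char_ode by (intro has_derivative_continuous_on) (auto simp: has_field_derivative_def)

definition "A t = a t (xs t)"

lemma A_cont: "continuous_on {0..T} A"
proof -
  have c: "continuous_on {0..T} (\<lambda>t. (t, xs t))" by (intro continuous_intros xs_cont)
  have s: "(\<lambda>t. (t, xs t)) ` {0..T} \<subseteq> R" using char_range by (auto simp: R_def)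
  show ?thesis using continuous_on_compose2[OF a_cont c s] by (simp add: A_def[abs_def])
qed

lemma path_deriv:
  assumes Yr: "\<And>s. s \<in> {0..T} \<Longrightarrow> Y s \<in> {-pi..pi}"
    and Yd: "(Y has_real_derivative Y') (at t within {0..T})"
    and t: "t \<in> {0..T}"
  shows "((\<lambda>s. a s (Y s)) has_real_derivative a_t t (Y t) + a_x t (Y t) * Y') (at t within {0..T})"
proof -
  have f: "((\<lambda>s. (s, Y s)) has_derivative (\<lambda>h. (h, Y' * h))) (at t within {0..T})"
    using Yd by (auto intro!: derivative_eq_intros simp: has_field_derivative_def mult.commute)
  have "((\<lambda>p. a (fst p) (snd p)) \<circ> (\<lambda>s. (s, Y s)) has_derivative
        (\<lambda>(h, k). a_t t (Y t) * h + a_x t (Y t) * k) \<circ> (\<lambda>h. (h, Y' * h))) (at t within {0..T})"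
    by (rule diff_chain_within[OF f has_derivative_subset[OF C1_deriv[OF t Yr[OF t]]]])
      (use Yr in auto)
  then have "((\<lambda>s. a s (Y s)) has_derivative (\<lambda>h. a_t t (Y t) * h + a_x t (Y t) * (Y' * h))) (at t within {0..T})"
    by (simp add: o_def)
  then show ?thesis unfolding has_field_derivative_def
    by (rule has_derivative_eq_rhs) (auto simp: fun_eq_iff algebra_simps)
qed

definition "Phi t = exp (integral {0..t} A)"

lemma Phi_deriv: "t \<in> {0..T} \<Longrightarrow> (Phi has_real_derivative A t * Phi t) (at t within {0..T})"
proof -
  assume t: "t \<in> {0..T}"
  have "((\<lambda>x. exp (integral {0..x} A)) has_real_derivative exp (integral {0..t} A) * A t) (at t within {0..T})"
    by (rule DERIV_chain2[OF DERIV_exp integral_has_real_derivative[OF A_cont t]])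
  then show ?thesis by (simp add: Phi_def[abs_def] mult.commute)
qed

definition "Mb M \<longleftrightarrow> M > 0 \<and> (\<forall>t\<in>{0..T}. \<forall>x\<in>{-pi..pi}. \<bar>a t x\<bar> \<le> M \<and> \<bar>a_x t x\<bar> \<le> M)"

lemma Phi_bounds:
  assumes M: "Mb M" and t: "t \<in> {0..T}"
  shows "exp (- M * T) \<le> Phi t" "Phi t \<le> exp (M * T)" "Phi t > 0"
proof -
  have "\<bar>integral {0..t} A - integral {0..0} A\<bar> \<le> M * (t - 0)"
  proof (rule mvt_bound_real[where f' = A])
    fix s assume s: "s \<in> {0..t}"
    show "((\<lambda>s. integral {0..s} A) has_real_derivative A s) (at s within {0..t})"
      by (rule DERIV_subset[OF integral_has_real_derivative[OF A_cont]]) (use s t in auto)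
    show "\<bar>A s\<bar> \<le> M" using M s t char_range[of s] by (auto simp: Mb_def A_def)
  qed (use t in auto)
  then have i: "\<bar>integral {0..t} A\<bar> \<le> M * T"
    using t M by (auto simp: Mb_def intro: order_trans mult_left_mono)
  show "exp (- M * T) \<le> Phi t" unfolding Phi_def using i by auto
  show "Phi t \<le> exp (M * T)" unfolding Phi_def using i by auto
  show "Phi t > 0" unfolding Phi_def by auto
qed

lemma u_lip:
  assumes M: "Mb M" and t: "t \<in> {0..T}" and x: "x \<in> {-pi..pi}" and y: "y \<in> {-pi..pi}"
  shows "\<bar>u t y - u t x\<bar> \<le> M * \<bar>y - x\<bar>"
proof -
  have "\<bar>u t y - u t x - 0 * (y - x)\<bar> \<le> M * \<bar>y - x\<bar>"
  proof (rule u_bound[OF t x y])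
    fix z assume "z \<in> {min x y..max x y}"
    then have "z \<in> {-pi..pi}" using x y by auto
    then show "\<bar>a t z - 0\<bar> \<le> M" using M t by (auto simp: Mb_def)
  qed
  then show ?thesis by simp
qed

lemma boundary:
  assumes M: "Mb M" and sg: "sg = 1 \<or> sg = -1" and t: "t \<in> {0..T}"
  shows "(pi - sg * x0) * exp (- M * T) \<le> pi - sg * xs t"
proof -
  define q where "q s = pi - sg * xs s" for s
  define f where "f s = exp (M * s) * q s" for s
  have qnn: "q s \<ge> 0" if "s \<in> {0..T}" for s
    using char_range[OF that] sg by (auto simp: q_def)
  have "f 0 \<le> f t"
  proof (rule mvt_mono_real[where f = f and a = 0 and b = t and f' = "\<lambda>s. exp (M * s) * (M * q s - sg * u s (xs s))"])
    show "0 \<le> t" using t by simp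
    fix s assume s: "s \<in> {0..t}"
    then have sT: "s \<in> {0..T}" using t by auto
    have xd: "(xs has_real_derivative u s (xs s)) (at s within {0..t})"
      using DERIV_subset[OF char_ode[OF sT]] t by (auto simp: u_def)
    show "(f has_real_derivative exp (M * s) * (M * q s - sg * u s (xs s))) (at s within {0..t})"
    proof -
      have "(f has_real_derivative exp (M * s) * M * q s + exp (M * s) * (- (sg * u s (xs s)))) (at s within {0..t})"
        unfolding f_def[abs_def] q_def[abs_def] by (auto intro!: derivative_eq_intros xd)
      then show ?thesis by (simp add: algebra_simps)
    qed
    have p: "sg * pi \<in> {-pi..pi}" using sg by auto
    have u0: "u s (sg * pi) = 0"
      using sg mean_zero[OF sT] by (auto simp: u_def)
    have "\<bar>u s (xs s) - u s (sg * pi)\<bar> \<le> M * \<bar>xs s - sg * pi\<bar>"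
      by (rule u_lip[OF M sT p char_range[OF sT]])
    moreover have "\<bar>xs s - sg * pi\<bar> = q s" using sg char_range[OF sT] by (auto simp: q_def)
    ultimately have "\<bar>u s (xs s)\<bar> \<le> M * q s" using u0 by simp
    moreover have "sg * u s (xs s) \<le> \<bar>u s (xs s)\<bar>" using sg by auto
    ultimately show "0 \<le> exp (M * s) * (M * q s - sg * u s (xs s))" by simp
  qed
  then have "q 0 \<le> exp (M * t) * q t" by (simp add: f_def)
  then have "q 0 * exp (- M * t) \<le> q t"
    by (simp add: exp_minus field_simps)
  moreover have "q 0 * exp (- M * T) \<le> q 0 * exp (- M * t)"
    using qnn[of 0] t M by (auto simp: Mb_def intro!: mult_left_mono)
  ultimately show ?thesis by (simp add: q_def char_init)
qed

lemma main:
  assumes t1: "t1 \<in> {0..T}"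
  shows "a_x t1 (xs t1) = 0"
proof -
  obtain M where M: "Mb M" using bounds unfolding Mb_def by blast
  have Mpos: "M > 0" using M by (simp add: Mb_def)
  have aM: "\<bar>a t x\<bar> \<le> M" "\<bar>a_x t x\<bar> \<le> M" if "t \<in> {0..T}" "x \<in> {-pi..pi}" for t x
    using M that by (auto simp: Mb_def)
  have T0: "T \<ge> 0" using t1 by simp
  have z0: "(0::real) \<in> {0..T}" using T0 by simp
  define sg where "sg = (if x0 < pi then 1 else -1 :: real)"
  have sg: "sg = 1 \<or> sg = -1" by (simp add: sg_def)
  have sgpos: "pi - sg * x0 > 0" using x0_in pi_gt_zero by (auto simp: sg_def)
  define E where "E = exp (M * T)"
  have E: "E \<ge> 1" using Mpos T0 by (simp add: E_def)
  have expmE: "exp (- M * T) = 1 / E" by (simp add: E_def exp_minus field_simps)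
  define Phi1 where "Phi1 = Phi t1"
  have Phi1: "Phi1 > 0" using Phi_bounds(3)[OF M t1] by (simp add: Phi1_def)
  define G where "G = exp ((2 * (2 * M) + 1) * T)"
  define C where "C = sqrt G * (1 + M * E) + Phi1"
  have Cpos: "C > 0" using Phi1 Mpos E by (simp add: C_def G_def add_nonneg_pos)
  define ax1 where "ax1 = a_x t1 (xs t1)"
  have key: "\<bar>ax1\<bar> * Phi1 \<le> e * C" if e: "e > 0" for e
  proof -
    obtain du where du: "du > 0" and duu: "\<forall>t\<in>{0..T}. \<forall>x\<in>{-pi..pi}. \<forall>y\<in>{-pi..pi}. \<bar>y - x\<bar> < du \<longrightarrow>
     \<bar>u t y - u t x - a t x * (y - x)\<bar> \<le> e * \<bar>y - x\<bar>"
      using u_unif[OF e] by blast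
    have "((a 0) has_derivative (*) (a_x 0 x0)) (at x0 within {-pi..pi})"
      using a_xderiv[OF z0 x0_in] by (simp add: has_field_derivative_def)
    then obtain d0 where d0: "d0 > 0" and d0d: "\<forall>y\<in>{-pi..pi}. norm (y - x0) < d0 \<longrightarrow>
        norm (a 0 y - a 0 x0 - a_x 0 x0 * (y - x0)) \<le> e * norm (y - x0)"
      unfolding has_derivative_within_alt using e by blast
    have "((a t1) has_derivative (*) ax1) (at (xs t1) within {-pi..pi})"
      using a_xderiv[OF t1 char_range[OF t1]] by (simp add: has_field_derivative_def ax1_def)
    then obtain d1 where d1: "d1 > 0" and d1d: "\<forall>y\<in>{-pi..pi}. norm (y - xs t1) < d1 \<longrightarrow>
        norm (a t1 y - a t1 (xs t1) - ax1 * (y - xs t1)) \<le> e * norm (y - xs t1)"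
      unfolding has_derivative_within_alt using e by blast
    define h0 where "h0 = (pi - sg * x0) / (E * E)"
    define h where "h = min (min h0 (du / (2 * E))) (min (d0 / 2) (d1 / (2 * E)))"
    have h0: "h0 > 0" using sgpos E by (simp add: h0_def)
    have hpos: "h > 0" using h0 du d0 d1 E by (simp add: h_def)
    have hh0: "h \<le> h0" by (simp add: h_def)
    have "h \<le> du / (2 * E)" by (simp add: h_def)
    then have "h * E \<le> du / 2" using E by (simp add: field_simps)
    then have hdu: "h * E < du" using du by linarith
    have "h \<le> d0 / 2" by (simp add: h_def)
    then have hd0: "h < d0" using d0 by linarith
    have "h \<le> d1 / (2 * E)" by (simp add: h_def)
    then have "h * E \<le> d1 / 2" using E by (simp add: field_simps)
    then have hd1: "h * E < d1" using d1 by linarith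
    define Y where "Y s = xs s + sg * h * Phi s" for s
    have Yxs: "\<bar>Y s - xs s\<bar> = h * Phi s" if s: "s \<in> {0..T}" for s
      using sg hpos Phi_bounds(3)[OF M s] by (auto simp: Y_def abs_mult)
    have YxsE: "\<bar>Y s - xs s\<bar> \<le> h * E" if s: "s \<in> {0..T}" for s
      using Yxs[OF s] Phi_bounds(2)[OF M s] hpos by (simp add: E_def)
    have Yr: "Y s \<in> {-pi..pi}" if s: "s \<in> {0..T}" for s
    proof -
      have "h * Phi s \<le> h0 * E"
        using Phi_bounds(2)[OF M s] Phi_bounds(3)[OF M s] hh0 hpos h0 unfolding E_def by (intro mult_mono) auto
      also have "\<dots> = (pi - sg * x0) * exp (- M * T)"
        unfolding expmE h0_def using E by (simp add: field_simps)
      also have "\<dots> \<le> pi - sg * xs s" by (rule boundary[OF M sg s])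
      finally have up: "h * Phi s \<le> pi - sg * xs s" .
      have lo: "h * Phi s \<ge> 0" using hpos Phi_bounds(3)[OF M s] by simp
      show ?thesis using sg up lo char_range[OF s] by (auto simp: Y_def)
    qed
    define Y' where "Y' s = u s (xs s) + sg * h * (A s * Phi s)" for s
    have Yd: "(Y has_real_derivative Y' s) (at s within {0..T})" if s: "s \<in> {0..T}" for s
      unfolding Y_def[abs_def] Y'_def
      using char_ode[OF s] Phi_deriv[OF s] by (auto intro!: derivative_eq_intros simp: u_def)
    have xsd: "(xs has_real_derivative u s (xs s)) (at s within {0..T})" if s: "s \<in> {0..T}" for s
      using char_ode[OF s] by (simp add: u_def)
    define D where "D s = a s (Y s) - a s (xs s)" for s
    define D' where "D' s = (a_t s (Y s) + a_x s (Y s) * Y' s) - (a_t s (xs s) + a_x s (xs s) * u s (xs s))" for s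
    have Dd: "(D has_real_derivative D' s) (at s within {0..T})" if s: "s \<in> {0..T}" for s
      unfolding D_def[abs_def] D'_def
      by (intro DERIV_diff path_deriv[OF Yr Yd[OF s] s] path_deriv[OF char_range xsd[OF s] s])
    have Db: "\<bar>D' s\<bar> \<le> (2 * M) * \<bar>D s\<bar> + M * (e * h * E)" if s: "s \<in> {0..T}" for s
    proof -
      define I where "I = (1 / pi) * integral {-pi..pi} (\<lambda>y. (a s y)\<^sup>2)"
      have p1: "a_t s (Y s) = - u s (Y s) * a_x s (Y s) + (a s (Y s))\<^sup>2 - I"
        using pde[OF s Yr[OF s]] by (simp add: u_def I_def algebra_simps)
      have p2: "a_t s (xs s) = - u s (xs s) * a_x s (xs s) + (a s (xs s))\<^sup>2 - I"
        using pde[OF s char_range[OF s]] by (simp add: u_def I_def algebra_simps)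
      define Err where "Err = u s (Y s) - u s (xs s) - a s (xs s) * (Y s - xs s)"
      have Err: "\<bar>Err\<bar> \<le> e * h * E"
      proof -
        have "\<bar>Err\<bar> \<le> e * \<bar>Y s - xs s\<bar>"
          using duu s char_range[OF s] Yr[OF s] YxsE[OF s] hdu unfolding Err_def by auto
        also have "\<dots> \<le> e * (h * E)" using YxsE[OF s] e by (simp add: mult_left_mono)
        finally show ?thesis by simp
      qed
      have "D' s = (a s (Y s) + a s (xs s)) * D s - a_x s (Y s) * Err"
        unfolding D'_def D_def Err_def p1 p2 Y'_def
        by (simp add: Y_def A_def power2_eq_square algebra_simps)
      then have "\<bar>D' s\<bar> \<le> \<bar>a s (Y s) + a s (xs s)\<bar> * \<bar>D s\<bar> + \<bar>a_x s (Y s)\<bar> * \<bar>Err\<bar>"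
        by (simp add: abs_mult[symmetric] abs_triangle_ineq4)
      also have "\<dots> \<le> (2 * M) * \<bar>D s\<bar> + M * (e * h * E)"
      proof (rule add_mono)
        have "\<bar>a s (Y s) + a s (xs s)\<bar> \<le> 2 * M"
          using aM(1)[OF s Yr[OF s]] aM(1)[OF s char_range[OF s]] by linarith
        then show "\<bar>a s (Y s) + a s (xs s)\<bar> * \<bar>D s\<bar> \<le> (2 * M) * \<bar>D s\<bar>"
          by (simp add: mult_right_mono)
        show "\<bar>a_x s (Y s)\<bar> * \<bar>Err\<bar> \<le> M * (e * h * E)"
          using aM(2)[OF s Yr[OF s]] Err by (simp add: mult_mono)
      qed
      finally show ?thesis .
    qed
    have gr: "(D t1)\<^sup>2 \<le> G * ((D 0)\<^sup>2 + (M * (e * h * E))\<^sup>2)"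
      unfolding G_def
      by (rule gronwall_sq[OF Dd Db _ _ t1]) (use Mpos e hpos E in auto)
    have Phi0: "Phi 0 = 1" by (simp add: Phi_def)
    have D0: "\<bar>D 0\<bar> \<le> e * h"
    proof -
      have Y0: "Y 0 = x0 + sg * h" by (simp add: Y_def Phi0 char_init)
      have "\<bar>Y 0 - x0\<bar> = h" using Y0 sg hpos by auto
      then show ?thesis
        using d0d Yr[OF z0] hd0 crit by (auto simp: D_def char_init)
    qed
    define c where "c = M * (e * h * E)"
    have c0: "c \<ge> 0" using Mpos e hpos E by (simp add: c_def)
    have "(D 0)\<^sup>2 + c\<^sup>2 \<le> (e * h + c)\<^sup>2"
    proof -
      have "(D 0)\<^sup>2 \<le> (e * h)\<^sup>2" using D0 by (metis abs_le_square_iff abs_of_nonneg e hpos less_imp_le mult_nonneg_nonneg)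
      moreover have "(e * h)\<^sup>2 + c\<^sup>2 \<le> (e * h + c)\<^sup>2" using c0 e hpos by (simp add: power2_eq_square algebra_simps)
      ultimately show ?thesis by simp
    qed
    then have "(D t1)\<^sup>2 \<le> G * (e * h + c)\<^sup>2"
      using gr by (smt (verit) G_def c_def exp_gt_zero mult_left_mono)
    then have "sqrt ((D t1)\<^sup>2) \<le> sqrt (G * (e * h + c)\<^sup>2)" by (rule real_sqrt_le_mono)
    then have Dt1: "\<bar>D t1\<bar> \<le> sqrt G * (e * h + c)"
      using c0 e hpos by (simp add: real_sqrt_mult)
    have low: "\<bar>D t1 - ax1 * (Y t1 - xs t1)\<bar> \<le> e * (h * Phi1)"
    proof -
      have "\<bar>Y t1 - xs t1\<bar> < d1" using YxsE[OF t1] hd1 by linarith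
      then have "\<bar>a t1 (Y t1) - a t1 (xs t1) - ax1 * (Y t1 - xs t1)\<bar> \<le> e * \<bar>Y t1 - xs t1\<bar>"
        using d1d Yr[OF t1] by auto
      then show ?thesis using Yxs[OF t1] unfolding D_def Phi1_def by simp
    qed
    have "\<bar>ax1\<bar> * (h * Phi1) = \<bar>ax1 * (Y t1 - xs t1)\<bar>"
      using Yxs[OF t1] by (simp add: abs_mult Phi1_def)
    also have "\<dots> \<le> \<bar>D t1\<bar> + e * (h * Phi1)" using low by linarith
    also have "\<dots> \<le> sqrt G * (e * h + c) + e * (h * Phi1)" using Dt1 by linarith
    also have "\<dots> = h * (e * C)" by (simp add: c_def C_def algebra_simps)
    finally have "h * (\<bar>ax1\<bar> * Phi1) \<le> h * (e * C)" by (simp add: algebra_simps)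
    then show ?thesis using hpos by simp
  qed
  have "\<bar>ax1\<bar> * Phi1 \<le> 0"
  proof (rule ccontr)
    assume "\<not> ?thesis"
    then have pos: "\<bar>ax1\<bar> * Phi1 > 0" by simp
    have "\<bar>ax1\<bar> * Phi1 \<le> (\<bar>ax1\<bar> * Phi1 / (2 * C)) * C"
      by (rule key) (use pos Cpos in simp)
    also have "\<dots> = \<bar>ax1\<bar> * Phi1 / 2" using Cpos by simp
    finally show False using pos by (simp add: mult.commute)
  qed
  then show ?thesis using Phi1 by (simp add: ax1_def mult_le_0_iff)
qed

end

theorem lemma2p4:
  fixes a a_t a_x :: "real \<Rightarrow> real \<Rightarrow> real"
    and xs :: "real \<Rightarrow> real"
    and T x0 :: real
  assumes C1_deriv: "\<And>t x. t \<in> {0..T} \<Longrightarrow> x \<in> {-pi..pi} \<Longrightarrow>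
      ((\<lambda>p. a (fst p) (snd p)) has_derivative (\<lambda>(h, k). a_t t x * h + a_x t x * k))
        (at (t, x) within {0..T} \<times> {-pi..pi})"
    and C1_cont_t: "continuous_on ({0..T} \<times> {-pi..pi}) (\<lambda>p. a_t (fst p) (snd p))"
    and C1_cont_x: "continuous_on ({0..T} \<times> {-pi..pi}) (\<lambda>p. a_x (fst p) (snd p))"
    and pde: "\<And>t x. t \<in> {0..T} \<Longrightarrow> x \<in> {-pi..pi} \<Longrightarrow>
      a_t t x + integral {-pi..x} (a t) * a_x t x - (a t x)\<^sup>2
        + (1 / pi) * integral {-pi..pi} (\<lambda>y. (a t y)\<^sup>2) = 0"
    and mean_zero: "\<And>t. t \<in> {0..T} \<Longrightarrow> integral {-pi..pi} (a t) = 0"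
    and x0_in: "x0 \<in> {-pi..pi}"
    and crit: "a_x 0 x0 = 0"
    and char_init: "xs 0 = x0"
    and char_range: "\<And>t. t \<in> {0..T} \<Longrightarrow> xs t \<in> {-pi..pi}"
    and char_ode: "\<And>t. t \<in> {0..T} \<Longrightarrow>
      (xs has_real_derivative integral {-pi..xs t} (a t)) (at t within {0..T})"
  shows "\<forall>t \<in> {0..T}. a_x t (xs t) = 0"
proof -
  interpret char_ctx a a_t a_x xs T x0
    by unfold_locales (use assms in auto)
  show ?thesis using main by blast
qed

end
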